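(* Let $q\ge 2$, $t\ge 2$ and $s\ge 1$ be integers. Then (2) $K_{q}^{RT}((t-1)q,s,(t-1)qs-t)\le K_{q}((t-1)q,(t-1)q-t)$; (3) $K_{q}^{RT}((t-1)q,s,(t-1)qs-t)\le q-2+CAN(t,(t-1)q,2)$.
   Context: For positive integers $m,s$, the RT poset $[m\times s]$ is the set $\{1,\ldots,ms\}$ partitioned into $m$ blocks $B_i=\{is+1,\ldots,(i+1)s\}$; each block is a chain under the usual order of the integers, and elements of different blocks are incomparable. An ideal is a subset $I$ such that $b\in I$ and $a\preceq b$ imply $a\in I$; $\langle A\rangle$ denotes the smallest ideal containing $A$. For $x,y\in\mathbb{Z}_q^{ms}$, the RT distance is $d_{RT}(x,y)=|\langle\{i:x_i\neq y_i\}\rangle|$. A code $C\subseteq \mathbb{Z}_q^{ms}$ is an $R$-covering if for every $x\in\mathbb{Z}_q^{ms}$ there is $c\in C$ with $d_{RT}(x,c)\le R$; $K_q^{RT}(m,s,R)$ is the smallest size of an $R$-covering. $K_q(n,R)=K_q^{RT}(n,1,R)$ is the classical Hamming covering number. A covering array $CA(N;t,n,v)$ ($2\le t\le n$) is an $N\times n$ array over an alphabet of size $v$ in which, for every set of $t$ columns, every $t$-tuple over the alphabet appears as a row of the corresponding $N\times t$ subarray; $CAN(t,n,v)$ is the least such $N$. *)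

theory Defs
  imports Main
begin

text \<open>Coordinates are indexed 0..ms-1 (the paper uses 1..ms). Block i is
  {i*s, ..., (i+1)*s - 1}; two positions are comparable iff in the same block.\<close>

definition rt_le :: "nat \<Rightarrow> nat \<Rightarrow> nat \<Rightarrow> bool" where
  "rt_le s a b \<longleftrightarrow> a div s = b div s \<and> a \<le> b"

definition rt_ideal :: "nat \<Rightarrow> nat set \<Rightarrow> nat set" where
  "rt_ideal s A = {a. \<exists>b\<in>A. rt_le s a b}"

text \<open>Z_q^n: vectors as functions, entries < q on 0..n-1, zero elsewhere.\<close>
definition space :: "nat \<Rightarrow> nat \<Rightarrow> (nat \<Rightarrow> nat) set" where
  "space q n = {x. (\<forall>i<n. x i < q) \<and> (\<forall>i\<ge>n. x i = 0)}"

definition d_RT :: "nat \<Rightarrow> nat \<Rightarrow> (nat \<Rightarrow> nat) \<Rightarrow> (nat \<Rightarrow> nat) \<Rightarrow> nat" where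
  "d_RT m s x y = card (rt_ideal s {i. i < m * s \<and> x i \<noteq> y i})"

definition rt_covering :: "nat \<Rightarrow> nat \<Rightarrow> nat \<Rightarrow> nat \<Rightarrow> (nat \<Rightarrow> nat) set \<Rightarrow> bool" where
  "rt_covering q m s R C \<longleftrightarrow> C \<subseteq> space q (m * s) \<and>
     (\<forall>x\<in>space q (m * s). \<exists>c\<in>C. d_RT m s x c \<le> R)"

definition K_RT :: "nat \<Rightarrow> nat \<Rightarrow> nat \<Rightarrow> nat \<Rightarrow> nat" where
  "K_RT q m s R = (LEAST k. \<exists>C. rt_covering q m s R C \<and> card C = k)"

definition K_H :: "nat \<Rightarrow> nat \<Rightarrow> nat \<Rightarrow> nat" where
  "K_H q n R = K_RT q n 1 R"

text \<open>Covering array CA(N;t,n,v): rows 0..N-1, columns 0..n-1, alphabet {0..<v}.\<close>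
definition covering_array :: "nat \<Rightarrow> nat \<Rightarrow> nat \<Rightarrow> nat \<Rightarrow> (nat \<Rightarrow> nat \<Rightarrow> nat) \<Rightarrow> bool" where
  "covering_array N t n v A \<longleftrightarrow>
     (\<forall>i<N. \<forall>j<n. A i j < v) \<and>
     (\<forall>T. T \<subseteq> {..<n} \<and> card T = t \<longrightarrow>
        (\<forall>f. (\<forall>j\<in>T. f j < v) \<longrightarrow> (\<exists>i<N. \<forall>j\<in>T. A i j = f j)))"

definition CAN :: "nat \<Rightarrow> nat \<Rightarrow> nat \<Rightarrow> nat" where
  "CAN t n v = (LEAST N. \<exists>A. covering_array N t n v A)"

end

theory Submission
  imports Defs
begin

lemma blk_div: "(s::nat) \<ge> 1 \<Longrightarrow> (i*s+s-1) div s = i"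
  by (metis (lifting) ext Euclidean_Rings.div_eq_0_iff add_cancel_left_right
    dec_greater_eq_self_imp_bot diff_le_self div_mult_self3 less_le_not_le
    order_le_less_trans ordered_cancel_comm_monoid_diff_class.add_diff_assoc
    zero_less_one)

lemma blk_mod: assumes "(s::nat) \<ge> 1" shows "(i*s+s-1) mod s = s - 1"
proof -
  obtain k where k: "s = Suc k" using assms by (cases s) auto
  have "i*s+s-1 = k + s*i" unfolding k by simp
  moreover have "(k + s*i) mod s = k"
    by (metis mod_mult_self1 mod_less k lessI mult.commute)
  ultimately show ?thesis using k by (metis diff_Suc_1)
qed

lemma blk_le: "(s::nat) \<ge> 1 \<Longrightarrow> b div s = i \<Longrightarrow> b \<le> i*s+s-1"
  by (metis dividend_less_div_times interval_class.less_imp_less_eq_dec add.commute bot_nat_0.extremum not_one_le_zero order.order_iff_strict)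

lemma blk_lt: assumes "(s::nat) \<ge> 1" "i < m" shows "i*s+s-1 < m*s"
proof -
  have "(i+1)*s \<le> m*s" using assms by (intro mult_le_mono1) simp
  thus ?thesis using assms by simp
qed

lemma blk_inj: "(s::nat) \<ge> 1 \<Longrightarrow> inj_on (\<lambda>i. i*s+s-1) A"
  by (smt (verit, ccfv_SIG) Nat.add_diff_assoc add_right_cancel inj_onI
    mult_cancel_right not_one_le_zero)

lemma dRT_bound:
  assumes s: "s \<ge> 1" and A: "A \<subseteq> {..<m}"
    and agree: "\<forall>i\<in>A. x (i*s+s-1) = c (i*s+s-1)"
  shows "d_RT m s x c \<le> m*s - card A"
proof -
  let ?L = "(\<lambda>i. i*s+s-1) ` A"
  have cL: "card ?L = card A" using blk_inj[OF s] by (rule card_image)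
  have Lsub: "?L \<subseteq> {..<m*s}" using A blk_lt[OF s] by auto
  have sub: "rt_ideal s {i. i < m*s \<and> x i \<noteq> c i} \<subseteq> {..<m*s} - ?L"
  proof
    fix a assume "a \<in> rt_ideal s {i. i < m*s \<and> x i \<noteq> c i}"
    then obtain b where b: "b < m*s" "x b \<noteq> c b" "a div s = b div s" "a \<le> b"
      unfolding rt_ideal_def rt_le_def by auto
    have "a < m*s" using b by simp
    moreover have "a \<notin> ?L"
    proof
      assume "a \<in> ?L"
      then obtain i where i: "i \<in> A" "a = i*s+s-1" by auto
      have "b div s = i" using b(3) i(2) blk_div[OF s] by simp
      hence "b \<le> a" using blk_le[OF s, of b i] i(2) by simp
      hence "b = a" using b(4) by simp
      thus False using b(2) agree i by simp
    qed
    ultimately show "a \<in> {..<m*s} - ?L" by simp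
  qed
  have "d_RT m s x c \<le> card ({..<m*s} - ?L)"
    unfolding d_RT_def by (rule card_mono[OF _ sub]) simp
  also have "\<dots> = m*s - card A"
    by (subst card_Diff_subset[OF finite_subset[OF Lsub] Lsub]) (simp_all only: cL card_lessThan finite_lessThan)
  finally show ?thesis .
qed

lemma finite_space: "finite (space q n)"
proof -
  have e: "space q n = {f. \<forall>x. (x \<in> {..<n::nat} \<longrightarrow> f x \<in> {..<q}) \<and> (x \<notin> {..<n} \<longrightarrow> f x = 0)}"
    unfolding space_def lessThan_iff not_less by blast
  have "finite {f::nat\<Rightarrow>nat. \<forall>x. (x \<in> {..<n::nat} \<longrightarrow> f x \<in> {..<q}) \<and> (x \<notin> {..<n} \<longrightarrow> f x = (0::nat))}"
    by (rule finite_set_of_finite_funs[OF finite_lessThan finite_lessThan])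
  thus ?thesis unfolding e .
qed

lemma dRT_self: "d_RT m s x x = 0"
  unfolding d_RT_def rt_ideal_def by simp

lemma space_cov: "rt_covering q m s R (space q (m*s))"
  unfolding rt_covering_def using dRT_self by (auto intro!: bexI)

lemma K_RT_le: "rt_covering q m s R C \<Longrightarrow> K_RT q m s R \<le> card C"
  unfolding K_RT_def by (rule Least_le) blast

lemma K_RT_wit: "\<exists>C. rt_covering q m s R C \<and> card C = K_RT q m s R"
  unfolding K_RT_def by (rule LeastI_ex) (use space_cov in blast)

lemma CA_exists: assumes "v > 0" shows "\<exists>N A. covering_array N t n v A"
proof -
  let ?F = "space v n"
  obtain g where g: "bij_betw g {..<card ?F} ?F"
    using ex_bij_betw_nat_finite[OF finite_space] by (auto simp: atLeast0LessThan)
  have "covering_array (card ?F) t n v g"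
    unfolding covering_array_def
  proof (intro conjI allI impI)
    fix i j assume i: "i < card ?F" and j: "j < n"
    have "g i \<in> ?F" using bij_betwE[OF g] i by blast
    thus "g i j < v" using j unfolding space_def by blast
  next
    fix T f assume T: "T \<subseteq> {..<n} \<and> card T = t" and f: "\<forall>j\<in>T. f j < v"
    let ?f = "\<lambda>j. if j \<in> T then f j else 0"
    have "\<forall>j<n. ?f j < v" using f assms by simp
    moreover have "\<forall>j\<ge>n. ?f j = 0" using T by auto
    ultimately have "?f \<in> ?F" unfolding space_def by blast
    hence "?f \<in> g ` {..<card ?F}" using bij_betw_imp_surj_on[OF g] by simp
    then obtain i where i: "?f = g i" "i \<in> {..<card ?F}" by (rule imageE)
    have "\<forall>j\<in>T. g i j = f j" using i(1) by (metis (mono_tags, lifting))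
    thus "\<exists>i<card ?F. \<forall>j\<in>T. g i j = f j" using i(2) by blast
  qed
  thus ?thesis by blast
qed

lemma CAN_wit: "\<exists>A. covering_array (CAN t n 2) t n 2 A"
  unfolding CAN_def by (rule LeastI_ex) (use CA_exists[of 2] in simp)

definition emb :: "nat \<Rightarrow> nat \<Rightarrow> (nat \<Rightarrow> nat) \<Rightarrow> (nat \<Rightarrow> nat)" where
  "emb n s g = (\<lambda>j. if j < n*s \<and> j mod s = s - 1 then g (j div s) else 0)"

lemma emb_space: assumes "\<forall>i<n. g i < q" "q \<ge> 1"
  shows "emb n s g \<in> space q (n*s)"
proof -
  have "j < n*s \<Longrightarrow> j div s < n" for j
    by (rule less_mult_imp_div_less)
  thus ?thesis using assms unfolding space_def emb_def by auto
qed

lemma emb_at: assumes "s \<ge> 1" "i < n" shows "emb n s g (i*s+s-1) = g i"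
  unfolding emb_def using assms blk_div blk_mod blk_lt by simp

lemma emb_at': assumes "s \<ge> 1" "i < n" shows "emb n s g (i*s+s-Suc 0) = g i"
  using emb_at[OF assms] by simp

theorem theorem2:
  fixes q t s :: nat
  assumes "q \<ge> 2" and "t \<ge> 2" and "s \<ge> 1"
  shows "K_RT q ((t - 1) * q) s ((t - 1) * q * s - t) \<le> K_H q ((t - 1) * q) ((t - 1) * q - t)
       \<and> K_RT q ((t - 1) * q) s ((t - 1) * q * s - t) \<le> q - 2 + CAN t ((t - 1) * q) 2"
proof
  define n where "n = (t - 1) * q"
  have s: "s \<ge> 1" using assms by simp
  have "(t-1)*2 \<le> (t-1)*q" using assms by (intro mult_le_mono2) simp
  hence nt: "t \<le> n" unfolding n_def using assms by linarith
  obtain C where C: "rt_covering q n 1 (n - t) C" "card C = K_H q n (n - t)"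
    using K_RT_wit unfolding K_H_def by blast
  have covC: "rt_covering q n s (n*s - t) (emb n s ` C)"
    unfolding rt_covering_def
  proof (intro conjI ballI)
    show "emb n s ` C \<subseteq> space q (n*s)"
      using C(1) emb_space[of n _ q s] assms unfolding rt_covering_def space_def by auto
  next
    fix x assume x: "x \<in> space q (n*s)"
    let ?y = "\<lambda>i. if i < n then x (i*s+s-1) else 0"
    have "?y \<in> space q (n*1)" using x blk_lt[OF s] unfolding space_def by auto
    then obtain c where c: "c \<in> C" "d_RT n 1 ?y c \<le> n - t" using C(1) unfolding rt_covering_def by blast
    let ?D = "{i. i < n \<and> ?y i \<noteq> c i}"
    have "rt_ideal 1 ?D = ?D" unfolding rt_ideal_def rt_le_def by auto
    hence cD: "card ?D \<le> n - t" using c(2) unfolding d_RT_def by simp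
    let ?A = "{i. i < n \<and> ?y i = c i}"
    have "?A = {..<n} - ?D" by auto
    hence "card ?A = n - card ?D" by (simp add: card_Diff_subset subset_eq)
    hence cA: "card ?A \<ge> t" using cD nt by simp
    have "d_RT n s x (emb n s c) \<le> n*s - card ?A"
      by (rule dRT_bound[OF s]) (auto simp: emb_at[OF s] emb_at'[OF s])
    hence "d_RT n s x (emb n s c) \<le> n*s - t" using cA by (meson diff_le_mono2 order_trans)
    thus "\<exists>c'\<in>emb n s ` C. d_RT n s x c' \<le> n*s - t" using c(1) by blast
  qed
  have "finite C" using C(1) finite_space rt_covering_def by (metis finite_subset)
  hence "card (emb n s ` C) \<le> card C" by (rule card_image_le)
  with K_RT_le[OF covC] C(2)
  show "K_RT q ((t - 1) * q) s ((t - 1) * q * s - t) \<le> K_H q ((t - 1) * q) ((t - 1) * q - t)"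
    unfolding n_def by simp
next
  define n where "n = (t - 1) * q"
  have s: "s \<ge> 1" using assms by simp
  obtain A where A: "covering_array (CAN t n 2) t n 2 A" using CAN_wit by blast
  let ?N = "CAN t n 2"
  let ?C = "(\<lambda>r. emb n s (A r)) ` {..<?N} \<union> (\<lambda>v. emb n s (\<lambda>_. v)) ` {2..<q}"
  have covC: "rt_covering q n s (n*s - t) ?C"
    unfolding rt_covering_def
  proof (intro conjI ballI)
    show "?C \<subseteq> space q (n*s)"
    proof
      fix z assume "z \<in> ?C"
      then consider r where "r < ?N" "z = emb n s (A r)" | v where "v < q" "z = emb n s (\<lambda>_. v)"
        by auto
      thus "z \<in> space q (n*s)"
      proof cases
        case 1
        have "\<forall>i<n. A r i < 2" using 1 A unfolding covering_array_def by blast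
        hence "\<forall>i<n. A r i < q" using assms by auto
        thus ?thesis using 1 assms by (simp add: emb_space)
      next
        case 2
        have "\<forall>i<n. v < q" using 2 by simp
        thus ?thesis using 2 assms by (simp add: emb_space)
      qed
    qed
  next
    fix x assume x: "x \<in> space q (n*s)"
    define y where "y = (\<lambda>i. x (i*s+s-1))"
    have yq: "i < n \<Longrightarrow> y i < q" for i using x blk_lt[OF s] unfolding space_def y_def by auto
    show "\<exists>c\<in>?C. d_RT n s x c \<le> n*s - t"
    proof (cases "\<exists>v\<in>{2..<q}. card {i. i < n \<and> y i = v} \<ge> t")
      case True
      then obtain v where v: "v \<in> {2..<q}" "card {i. i < n \<and> y i = v} \<ge> t" by blast
      have "d_RT n s x (emb n s (\<lambda>_. v)) \<le> n*s - card {i. i < n \<and> y i = v}"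
        by (rule dRT_bound[OF s]) (auto simp: emb_at[OF s] emb_at'[OF s] y_def)
      hence "d_RT n s x (emb n s (\<lambda>_. v)) \<le> n*s - t" using v(2) by (meson diff_le_mono2 order_trans)
      thus ?thesis using v(1) by blast
    next
      case False
      have small: "\<forall>v\<in>{2..<q}. card {i. i < n \<and> y i = v} \<le> t - 1"
      proof
        fix v assume "v \<in> {2..<q}"
        hence "\<not> t \<le> card {i. i < n \<and> y i = v}" using False by blast
        thus "card {i. i < n \<and> y i = v} \<le> t - 1" by linarith
      qed
      have "{i. i < n \<and> y i \<ge> 2} = (\<Union>v\<in>{2..<q}. {i. i < n \<and> y i = v})"
        using yq by auto
      hence "card {i. i < n \<and> y i \<ge> 2} \<le> (\<Sum>v\<in>{2..<q}. card {i. i < n \<and> y i = v})"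
        by (simp add: card_UN_le)
      also have "\<dots> \<le> (\<Sum>v\<in>{2..<q}. t - 1)" using small by (intro sum_mono) auto
      also have "\<dots> = (q - 2) * (t - 1)" by simp
      finally have big: "card {i. i < n \<and> y i \<ge> 2} \<le> (q - 2) * (t - 1)" .
      let ?S = "{i. i < n \<and> y i < 2}"
      have "?S = {..<n} - {i. i < n \<and> y i \<ge> 2}" by auto
      hence "card ?S = n - card {i. i < n \<and> y i \<ge> 2}" by (simp add: card_Diff_subset subset_eq)
      moreover have "n = (q - 2) * (t - 1) + 2 * (t - 1)" unfolding n_def using assms
        by (metis add_mult_distrib le_add_diff_inverse2 mult.commute)
      ultimately have "card ?S \<ge> 2 * (t - 1)" using big by linarith
      hence "card ?S \<ge> t" using assms by linarith
      then obtain T where T: "T \<subseteq> ?S" "card T = t"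
        using obtain_subset_with_card_n by metis
      have "T \<subseteq> {..<n}" using T by auto
      then obtain r where r: "r < ?N" "\<forall>j\<in>T. A r j = y j"
        using A T unfolding covering_array_def by blast
      have "d_RT n s x (emb n s (A r)) \<le> n*s - card T"
        by (rule dRT_bound[OF s]) (use T r in \<open>auto simp: emb_at[OF s] emb_at'[OF s] y_def\<close>)
      hence "d_RT n s x (emb n s (A r)) \<le> n*s - t" using T(2) by simp
      thus ?thesis using r(1) by blast
    qed
  qed
  have "card ?C \<le> card ((\<lambda>r. emb n s (A r)) ` {..<?N}) + card ((\<lambda>v. emb n s (\<lambda>_. v)) ` {2..<q})"
    by (rule card_Un_le)
  also have "\<dots> \<le> ?N + (q - 2)"
    using card_image_le[of "{..<?N}" "\<lambda>r. emb n s (A r)"] card_image_le[of "{2..<q}" "\<lambda>v. emb n s (\<lambda>_. v)"]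
    by simp
  finally have "card ?C \<le> q - 2 + ?N" by simp
  with K_RT_le[OF covC]
  show "K_RT q ((t - 1) * q) s ((t - 1) * q * s - t) \<le> q - 2 + CAN t ((t - 1) * q) 2"
    unfolding n_def by simp
qed

end
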